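(* Define a sequence of permutations $(a_i)_{i\ge 1}$ as follows. Let $$a_1 = 13\;12\;10\;14\;8\;11\;6\;9\;4\;7\;3\;2\;1\;5,$$ a permutation of $\{1,\dots,14\}$ in one-line notation. Given $a_i$, a permutation of $\{1,\dots,n\}$ whose maximum entry is $m=n$, obtain $a_{i+1}$ by: increasing by $2$ every entry of $a_i$ that is weakly to the left of the position of $m$ (including $m$ itself), leaving all entries to the right of $m$ unchanged, and inserting immediately after the (now incremented) maximum entry two new consecutive entries with values $m-4$ and $m-1$, in this order. (For example, $a_2 = 15\;14\;12\;16\;10\;13\;8\;11\;6\;9\;4\;7\;3\;2\;1\;5$.) Then each $a_i$ is a permutation of $\{1,\dots,2i+12\}$, and for all $i\neq j$ the permutations $a_i$ and $a_j$ are incomparable in the pattern-containment order. Consequently, the partially ordered set of all finite permutations ordered by pattern containment contains an infinite antichain, namely $\{a_i : i\ge 1\}$.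
   Context: A permutation of $\{1,\dots,n\}$ is written in one-line notation as the sequence $p(1)\,p(2)\cdots p(n)$. For a permutation $p_1$ of $\{1,\dots,m\}$ and a permutation $p_2$ of $\{1,\dots,n\}$ with $m\le n$, we say $p_1 \le p_2$ ($p_1$ is contained in $p_2$) if one can delete $n-m$ entries from the sequence $p_2$ so that, after renaming the remaining $m$ entries by their relative rank (the smallest becomes $1$, the next $2$, etc.), one obtains exactly $p_1$; equivalently, there are positions $k_1<\dots<k_m$ with $p_2(k_s)<p_2(k_t)$ if and only if $p_1(s)<p_1(t)$. This makes the set of all finite permutations a partially ordered set. An antichain is a set of pairwise incomparable elements. *)

theory Defs
  imports Main
begin

text \<open>Permutations of {1..n} in one-line notation, represented as lists
  (entry at list index k is p(k+1)).\<close>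
definition is_perm :: "nat \<Rightarrow> nat list \<Rightarrow> bool" where
  "is_perm n p \<longleftrightarrow> length p = n \<and> distinct p \<and> set p = {1..n}"

definition all_perms :: "nat list set" where
  "all_perms = {p. \<exists>n. is_perm n p}"

definition contained :: "nat list \<Rightarrow> nat list \<Rightarrow> bool" where
  "contained p1 p2 \<longleftrightarrow> length p1 \<le> length p2 \<and>
     (\<exists>ks :: nat list. length ks = length p1 \<and> sorted_wrt (<) ks \<and>
        (\<forall>k\<in>set ks. k < length p2) \<and>
        (\<forall>s<length p1. \<forall>t<length p1. (p2 ! (ks ! s) < p2 ! (ks ! t)) \<longleftrightarrow> (p1 ! s < p1 ! t)))"

definition antichain_in :: "nat list set \<Rightarrow> nat list set \<Rightarrow> bool" where
  "antichain_in U A \<longleftrightarrow> A \<subseteq> U \<and> (\<forall>x\<in>A. \<forall>y\<in>A. x \<noteq> y \<longrightarrow> \<not> contained x y)"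

definition step :: "nat list \<Rightarrow> nat list" where
  "step p = (let m = Max (set p); k = length (takeWhile (\<lambda>x. x \<noteq> m) p)
             in map (\<lambda>x. x + 2) (take (Suc k) p) @ [m - 4, m - 1] @ drop (Suc k) p)"

definition a1 :: "nat list" where
  "a1 = [13, 12, 10, 14, 8, 11, 6, 9, 4, 7, 3, 2, 1, 5]"

primrec a_aux :: "nat \<Rightarrow> nat list" where
  "a_aux 0 = a1"
| "a_aux (Suc i) = step (a_aux i)"

definition a :: "nat \<Rightarrow> nat list" where
  "a i = a_aux (i - 1)"

end

theory Submission
  imports Defs
begin


definition g :: "nat \<Rightarrow> nat \<Rightarrow> nat" where
 "g n s = (if s = 0 then n-1 else if s = 1 then n-2 else if s = 2 then n-4 else if s = 3 then n
   else if s = n-4 then 3 else if s = n-3 then 2 else if s = n-2 then 1 else if s = n-1 then 5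
   else if s mod 2 = 0 then n-s-2 else n+2-s)"

definition e1 :: "nat \<Rightarrow> nat \<Rightarrow> nat \<Rightarrow> bool" where
 "e1 n x y \<longleftrightarrow> (x \<le> 2 \<and> y = 3) \<or> (x mod 2 = 0 \<and> 2 \<le> x \<and> x + 8 \<le> n \<and> y = x+3)
   \<or> (x mod 2 = 0 \<and> 4 \<le> x \<and> x + 6 \<le> n \<and> y = x+1) \<or> (x + 6 = n \<and> y + 1 = n)
   \<or> (n \<le> x + 4 \<and> x + 2 \<le> n \<and> y + 1 = n)"

definition phi :: "nat \<Rightarrow> nat \<Rightarrow> nat" where
 "phi n x = (if x \<le> 2 then 1 else if x = 3 then 0 else if x + 1 = n then n-6
   else if n \<le> x + 4 then n-5 else if x mod 2 = 0 then x-1 else x-3)"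

definition nb1 :: "nat \<Rightarrow> nat \<Rightarrow> nat" where
 "nb1 n x = (if x \<le> 2 then 3 else if n \<le> x+4 then n-1 else if x mod 2 = 0 then x+1 else x-1)"
definition nb2 :: "nat \<Rightarrow> nat \<Rightarrow> nat" where
 "nb2 n x = (if x = 2 then 5 else if x \<le> 1 then 3 else if n \<le> x + 4 then n-1
    else if x+6 = n then n-1 else if x mod 2 = 0 then x+3 else x-3)"

lemma phi_lip:
  assumes "n = 2*k+14" "e1 n x y" "y < n"
  shows "phi n y \<le> phi n x + 1 \<and> phi n x \<le> phi n y + 1"
  using assms unfolding e1_def phi_def
  apply (elim disjE conjE)
  apply (simp_all)
  apply presburger+
  done

lemma nb_lem:
  assumes "n = 2*k+14" "e1 n x y" "y < n"
  shows "(x \<noteq> 3 \<longrightarrow> y = nb1 n x \<or> y = nb2 n x) \<and> (y \<noteq> n - 1 \<and> y \<noteq> 3 \<longrightarrow> x = nb1 n y \<or> x = nb2 n y)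
     \<and> (y = 3 \<longrightarrow> x \<le> 2)"
  using assms unfolding e1_def nb1_def nb2_def
  apply (elim disjE conjE)
  apply (simp_all)
  apply presburger+
  done



definition G :: "nat \<Rightarrow> nat \<Rightarrow> nat \<Rightarrow> bool" where
 "G k s v \<longleftrightarrow> (s = 0 \<and> v = 2*k+13) \<or> (s = 1 \<and> v = 2*k+12) \<or> (s=2 \<and> v = 2*k+10) \<or> (s=3 \<and> v = 2*k+14)
   \<or> (s = 2*k+10 \<and> v = 3) \<or> (s = 2*k+11 \<and> v = 2) \<or> (s = 2*k+12 \<and> v = 1) \<or> (s = 2*k+13 \<and> v = 5)
   \<or> (\<exists>b. s = 2*b+4 \<and> b \<le> k+2 \<and> v = 2*k+8-2*b)
   \<or> (\<exists>b. s = 2*b+5 \<and> b \<le> k+2 \<and> v = 2*k+11-2*b)"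

lemma par1[simp]: "2*(c::nat) \<noteq> Suc (2*b)" "Suc (2*b) \<noteq> 2*(c::nat)"
  by presburger+

lemma par2: "numeral (num.Bit1 w) + 2*k \<noteq> 2*(b::nat)"
proof
  assume h: "numeral (num.Bit1 w) + 2*k = 2*(b::nat)"
  then have "even (numeral (num.Bit1 w) + 2*k)" by (metis dvd_triv_left)
  then show False by simp
qed
lemma par3[simp]: "numeral (num.Bit1 w) + 2*k \<noteq> 2*(b::nat)" "2*(b::nat) \<noteq> numeral (num.Bit1 w) + 2*k"
  using par2 by metis+

lemma GG: "G k x vx \<Longrightarrow> G k y vy \<Longrightarrow> x < y \<Longrightarrow> (vx < vy) \<longleftrightarrow> e1 (2*k+14) x y"
  unfolding G_def e1_def
  apply (elim disjE exE conjE)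
  apply simp_all
  apply arith+
  done

definition E :: "nat \<Rightarrow> nat \<Rightarrow> nat \<Rightarrow> bool" where
 "E n x y \<longleftrightarrow> (x < y \<and> g n x < g n y) \<or> (y < x \<and> g n y < g n x)"

lemma g_G:
  assumes "n = 2*k+14" "s < n"
  shows "G k s (g n s)"
proof -
  consider "s \<le> 3" | "s + 4 \<ge> n" | "4 \<le> s" "s + 5 \<le> n" using assms by linarith
  then show ?thesis
  proof cases
    case 1 then have "s = 0 \<or> s = 1 \<or> s = 2 \<or> s = 3" by auto
    then show ?thesis using assms unfolding G_def g_def by auto
  next
    case 2 then have "s = n-4 \<or> s = n-3 \<or> s = n-2 \<or> s = n-1" using assms by linarith
    then show ?thesis using assms unfolding G_def g_def by auto
  next
    case 3
    have "\<exists>b. s = 2*b+4 \<or> s = 2*b+5" using 3 by presburger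
    then obtain b where "s = 2*b+4 \<or> s = 2*b+5" by blast
    then show ?thesis using assms 3 unfolding G_def g_def by auto
  qed
qed

lemma G_range: "G k s v \<Longrightarrow> 1 \<le> v \<and> v \<le> 2*k+14"
  unfolding G_def by auto

lemma G_inj: "G k x vx \<Longrightarrow> G k y vy \<Longrightarrow> x < y \<Longrightarrow> vx \<noteq> vy"
  unfolding G_def
  apply (elim disjE exE conjE)
  apply simp_all
  apply arith+
  done

lemma E_e1:
  assumes "n = 2*k+14" "x < n" "y < n"
  shows "E n x y \<longleftrightarrow> (x < y \<and> e1 n x y) \<or> (y < x \<and> e1 n y x)"
  using GG[OF g_G[OF assms(1,2)] g_G[OF assms(1,3)]] GG[OF g_G[OF assms(1,3)] g_G[OF assms(1,2)]]
  unfolding E_def assms(1) by auto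


definition w :: "nat \<Rightarrow> nat \<Rightarrow> nat" where
  "w n t = (if t = 0 then 3 else if t = 1 then 2 else if t + 6 = n then n - 1
     else if t mod 2 = 0 then t+3 else t+1)"

lemma w_lt: "n = 2*k+14 \<Longrightarrow> t + 6 \<le> n \<Longrightarrow> w n t < n"
  unfolding w_def by auto

lemma w_e1: 
  assumes n: "n = 2*k+14" and t: "t + 6 < n"
  shows "(w n t < w n (Suc t) \<and> e1 n (w n t) (w n (Suc t))) \<or> (w n (Suc t) < w n t \<and> e1 n (w n (Suc t)) (w n t))"
proof -
  consider "t = 0" | "t = 1" | "t + 7 = n" | b where "t = 2*b+2" "t + 7 < n" | b where "t = 2*b+3" "t + 7 < n"
  proof -
    assume h: "t = 0 \<Longrightarrow> thesis" "t = 1 \<Longrightarrow> thesis" "t + 7 = n \<Longrightarrow> thesis"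
      "\<And>b. t = 2 * b + 2 \<Longrightarrow> t + 7 < n \<Longrightarrow> thesis" "\<And>b. t = 2 * b + 3 \<Longrightarrow> t + 7 < n \<Longrightarrow> thesis"
    have "t = 0 \<or> t = 1 \<or> t + 7 = n \<or> (\<exists>b. t = 2*b+2 \<and> t + 7 < n) \<or> (\<exists>b. t = 2*b+3 \<and> t + 7 < n)"
      using n t by presburger
    then show thesis using h by blast
  qed
  then show ?thesis
  proof cases
    case 1 then show ?thesis using n by (simp add: w_def e1_def)
  next
    case 2 then show ?thesis using n by (simp add: w_def e1_def)
  next
    case 3
    then have "t = 2*k+7" using n by simp
    then show ?thesis using n by (simp add: w_def e1_def)
  next
    case (4 b)
    have "t + 6 \<noteq> n" "Suc t + 6 \<noteq> n" using 4 n by presburger+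
    then show ?thesis using 4 n by (simp add: w_def e1_def)
  next
    case (5 b)
    have "t + 6 \<noteq> n" "Suc t + 6 \<noteq> n" "2*b \<le> 2*k+2" using 5 n by presburger+
    then show ?thesis using 5 n by (simp add: w_def e1_def)
  qed
qed

lemma w_edge:
  assumes n: "n = 2*k+14" and t: "t + 6 < n"
  shows "E n (w n t) (w n (Suc t))"
proof -
  have l: "w n t < n" "w n (Suc t) < n" using w_lt[OF n] t by auto
  show ?thesis using E_e1[OF n l] w_e1[OF n t] by blast
qed

lemma leaves:
  assumes "n = 2*k+14"
  shows "E n 3 0" "E n 3 1" "E n 3 2" "E n (n-1) (n-6)" "E n (n-1) (n-4)" "E n (n-1) (n-3)" "E n (n-1) (n-2)"
  using assms by (simp_all add: E_e1 e1_def)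

lemma E_sym: "E n x y = E n y x" unfolding E_def by auto

lemma E_nb:
  assumes n: "n = 2*k+14" and xy: "x < n" "y < n" and e: "E n x y" and x: "x \<noteq> 3" "x \<noteq> n - 1"
  shows "y = nb1 n x \<or> y = nb2 n x"
proof -
  have "(x < y \<and> e1 n x y) \<or> (y < x \<and> e1 n y x)" using E_e1[OF n xy] e by blast
  then show ?thesis
  proof
    assume h: "x < y \<and> e1 n x y"
    show ?thesis using nb_lem[OF n, of x y] h xy x by blast
  next
    assume h: "y < x \<and> e1 n y x"
    show ?thesis using nb_lem[OF n, of y x] h xy x by blast
  qed
qed

lemma E_3:
  assumes n: "n = 2*k+14" and y: "y < n" and e: "E n 3 y"
  shows "y \<le> 2"
proof -
  have "(3 < y \<and> e1 n 3 y) \<or> (y < 3 \<and> e1 n y 3)" using E_e1[OF n _ y, of 3] e n by simp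
  moreover have "\<not> e1 n 3 y" using n unfolding e1_def by simp
  ultimately show ?thesis by auto
qed

lemma deg3:
  assumes n: "n = 2*k+14" and "x < n" "y1 < n" "y2 < n" "y3 < n" "E n x y1" "E n x y2" "E n x y3"
    and d: "y1 \<noteq> y2" "y1 \<noteq> y3" "y2 \<noteq> y3"
  shows "x = 3 \<or> x = n - 1"
proof (rule ccontr)
  assume "\<not> (x = 3 \<or> x = n - 1)"
  then have "x \<noteq> 3" "x \<noteq> n - 1" by auto
  then have "y1 = nb1 n x \<or> y1 = nb2 n x" "y2 = nb1 n x \<or> y2 = nb2 n x" "y3 = nb1 n x \<or> y3 = nb2 n x"
    using E_nb[OF n] assms by blast+
  then show False using d by auto
qed

lemma deg4:
  assumes n: "n = 2*k+14" and "x < n" "y1 < n" "y2 < n" "y3 < n" "y4 < n"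
    "E n x y1" "E n x y2" "E n x y3" "E n x y4"
    "y1 \<noteq> y2" "y1 \<noteq> y3" "y2 \<noteq> y3" "y1 \<noteq> y4" "y2 \<noteq> y4" "y3 \<noteq> y4"
  shows "x = n - 1"
proof -
  have "x = 3 \<or> x = n - 1" using deg3[OF assms(1-5,7-9,11-13)] .
  moreover have "x \<noteq> 3"
  proof
    assume "x = 3"
    then have "y1 \<le> 2" "y2 \<le> 2" "y3 \<le> 2" "y4 \<le> 2" using E_3[OF n] assms by auto
    then have "y1 \<in> {0,1,2}" "y2 \<in> {0,1,2}" "y3 \<in> {0,1,2}" "y4 \<in> {0,1,2}" by auto
    then show False using assms(11-16) by auto
  qed
  ultimately show ?thesis by blast
qed

lemma phi_E:
  assumes "n = 2*k+14" "x < n" "y < n" "E n x y"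
  shows "phi n y \<le> phi n x + 1"
  using assms E_e1[OF assms(1,2,3)] phi_lip[OF assms(1)] by auto

lemma no_embed:
  assumes n: "n = 2*k+14" and n': "n' = 2*k'+14" and kk: "k < k'"
    and fb: "\<And>s. s < n \<Longrightarrow> f s < n'"
    and mono: "\<And>s t. s < t \<Longrightarrow> t < n \<Longrightarrow> f s < f t"
    and ord: "\<And>s t. s < n \<Longrightarrow> t < n \<Longrightarrow> (g n' (f s) < g n' (f t)) = (g n s < g n t)"
  shows False
proof -
  have Em: "E n' (f s) (f t)" if "s < n" "t < n" "E n s t" for s t
  proof -
    from that(3) consider "s < t" "g n s < g n t" | "t < s" "g n t < g n s" unfolding E_def by blast
    then show ?thesis
    proof cases
      case 1 then show ?thesis using mono[OF 1(1) that(2)] ord[OF that(1,2)] unfolding E_def by auto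
    next
      case 2 then show ?thesis using mono[OF 2(1) that(1)] ord[OF that(2,1)] unfolding E_def by auto
    qed
  qed
  have lv: "E n (n-1) (n-6)" "E n (n-1) (n-4)" "E n (n-1) (n-3)" "E n (n-1) (n-2)"
    "E n 3 0" "E n 3 1" "E n 3 2" using leaves[OF n] by auto
  have m1: "f (n-6) < f (n-4)" "f (n-4) < f (n-3)" "f (n-3) < f (n-2)" "f (n-2) < f (n-1)"
    using mono n by auto
  have A: "f (n-1) < n'" "f (n-6) < n'" "f (n-4) < n'" "f (n-3) < n'" "f (n-2) < n'"
    using fb n by auto
  have B: "E n' (f (n-1)) (f (n-6))" "E n' (f (n-1)) (f (n-4))" "E n' (f (n-1)) (f (n-3))" "E n' (f (n-1)) (f (n-2))"
    using Em lv n by auto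
  have C: "f (n-6) \<noteq> f (n-4)" "f (n-6) \<noteq> f (n-3)" "f (n-4) \<noteq> f (n-3)" "f (n-6) \<noteq> f (n-2)" "f (n-4) \<noteq> f (n-2)" "f (n-3) \<noteq> f (n-2)"
    using m1 by linarith+
  have top: "f (n-1) = n' - 1" using deg4[OF n' A B C] .
  have m2: "f 0 < f 1" "f 1 < f 2" "f 2 < f 3" "f 3 < f (n-1)" using mono n by auto
  have A2: "f 3 < n'" "f 0 < n'" "f 1 < n'" "f 2 < n'" using fb n by auto
  have B2: "E n' (f 3) (f 0)" "E n' (f 3) (f 1)" "E n' (f 3) (f 2)" using Em lv n by auto
  have C2: "f 0 \<noteq> f 1" "f 0 \<noteq> f 2" "f 1 \<noteq> f 2" using m2 by linarith+
  have "f 3 = 3 \<or> f 3 = n' - 1" using deg3[OF n' A2 B2 C2] .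
  then have bot: "f 3 = 3" using m2 top by auto
  have P: "phi n' (f (w n t)) \<le> t" if "t + 6 \<le> n" for t
    using that
  proof (induction t)
    case 0
    then show ?case using bot by (simp add: w_def phi_def)
  next
    case (Suc t)
    have e: "E n (w n t) (w n (Suc t))" using w_edge[OF n] Suc.prems by auto
    have l1: "w n t < n" "w n (Suc t) < n" using w_lt[OF n] Suc.prems by auto
    have "phi n' (f (w n (Suc t))) \<le> phi n' (f (w n t)) + 1"
      using phi_E[OF n' fb[OF l1(1)] fb[OF l1(2)] Em[OF l1 e]] .
    then show ?case using Suc by auto
  qed
  have "w n (n - 6) = n - 1" using n by (simp add: w_def)
  then have "phi n' (f (n-1)) \<le> n - 6" using P[of "n-6"] n by auto
  then show False using top n n' kk by (simp add: phi_def)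
qed


definition L :: "nat \<Rightarrow> nat list" where "L k = map (g (2*k+14)) [0..<2*k+14]"

lemma L_perm: "is_perm (2*k+14) (L k)"
proof -
  let ?n = "2*k+14"
  have len: "length (L k) = ?n" by (simp add: L_def)
  have inj: "inj_on (g ?n) {0..<?n}"
  proof (rule inj_onI)
    fix x y assume xy: "x \<in> {0..<?n}" "y \<in> {0..<?n}" and e: "g ?n x = g ?n y"
    have Gx: "G k x (g ?n x)" using g_G[OF refl] xy by simp
    have Gy: "G k y (g ?n y)" using g_G[OF refl] xy by simp
    show "x = y"
    proof (rule ccontr)
      assume "x \<noteq> y"
      then consider "x < y" | "y < x" by linarith
      then show False
      proof cases
        case 1 then show False using G_inj[OF Gx Gy] e by simp
      next
        case 2 then show False using G_inj[OF Gy Gx] e by simp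
      qed
    qed
  qed
  have dist: "distinct (L k)" unfolding L_def using inj by (simp add: distinct_map)
  have sub: "set (L k) \<subseteq> {1..?n}"
  proof
    fix v assume "v \<in> set (L k)"
    then obtain s where "s < ?n" "v = g ?n s" unfolding L_def by auto
    then show "v \<in> {1..?n}" using G_range[OF g_G[OF refl]] by auto
  qed
  have "card (set (L k)) = ?n" using distinct_card[OF dist] len by simp
  then have "set (L k) = {1..?n}" using card_subset_eq[OF finite_atLeastAtMost sub] by simp
  then show ?thesis unfolding is_perm_def using len dist by simp
qed

lemma shift: "4 \<le> s \<Longrightarrow> s < 2*k+14 \<Longrightarrow> g (2*(Suc k)+14) (s+2) = g (2*k+14) s"
  unfolding g_def by auto

lemma L_step: "step (L k) = L (Suc k)"
proof -
  let ?n = "2*k+14"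
  let ?g = "g ?n"
  let ?g' = "g (2*(Suc k)+14)"
  have u1: "[0..<2*k+14] = [0..<4] @ [4..<2*k+14]"
    using upt_add_eq_append[of 0 4 "2*k+10"] by (simp add: add.commute)
  have u2: "[0..<2*(Suc k)+14] = [0..<6] @ [6..<2*(Suc k)+14]"
    using upt_add_eq_append[of 0 6 "2*k+10"] by (simp add: add.commute)
  have u3: "[0..<4] = [0,1,2,3::nat]" "[0..<6] = [0,1,2,3,4,5::nat]" by (simp_all add: upt_rec)
  have Lk: "L k = [2*k+13, 2*k+12, 2*k+10, 2*k+14] @ map ?g [4..<2*k+14]"
    unfolding L_def u1 u3 by (simp add: g_def)
  have Lk': "L (Suc k) = [2*k+15, 2*k+14, 2*k+12, 2*k+16, 2*k+10, 2*k+13] @ map ?g' [6..<2*(Suc k)+14]"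
    unfolding L_def u2 u3 by (simp add: g_def)
  have tail: "map ?g' [6..<2*(Suc k)+14] = map ?g [4..<2*k+14]"
  proof (rule nth_equalityI)
    show "length (map ?g' [6..<2*(Suc k)+14]) = length (map ?g [4..<2*k+14])" by simp
    fix i assume "i < length (map ?g' [6..<2*(Suc k)+14])"
    then have i: "i < 2*k+10" by simp
    have "map ?g' [6..<2*(Suc k)+14] ! i = ?g' ((4+i)+2)" using i by (simp add: add.commute)
    also have "\<dots> = ?g (4+i)" using shift[of "4+i" k] i by simp
    also have "\<dots> = map ?g [4..<2*k+14] ! i" using i by simp
    finally show "map ?g' [6..<2*(Suc k)+14] ! i = map ?g [4..<2*k+14] ! i" .
  qed
  have S: "set (L k) = {1..?n}" using L_perm[of k] unfolding is_perm_def by simp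
  have M: "Max (set (L k)) = ?n" unfolding S by (rule Max_eqI) auto
  have tw: "takeWhile (\<lambda>x. x \<noteq> ?n) (L k) = [2*k+13, 2*k+12, 2*k+10]" unfolding Lk by simp
  have "step (L k) = [2*k+15, 2*k+14, 2*k+12, 2*k+16] @ [2*k+10, 2*k+13] @ map ?g [4..<2*k+14]"
    unfolding step_def Let_def M tw by (simp add: Lk)
  then show ?thesis using Lk' tail by simp
qed

lemma a_aux_L: "a_aux k = L k"
proof (induction k)
  case 0
  show ?case by (simp add: L_def a1_def g_def upt_rec)
next
  case (Suc k)
  then show ?case using L_step by simp
qed

lemma a_L: "1 \<le> i \<Longrightarrow> a i = L (i - 1)"
  unfolding a_def by (simp add: a_aux_L)

lemma len_L: "length (L k) = 2*k+14" by (simp add: L_def)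

lemma not_contained_L:
  assumes kk: "k < k'"
  shows "\<not> contained (L k) (L k')"
proof
  assume "contained (L k) (L k')"
  then obtain ks where ks: "length ks = length (L k)" "sorted_wrt (<) ks"
     "\<forall>x\<in>set ks. x < length (L k')"
     "\<forall>s<length (L k). \<forall>t<length (L k). (L k' ! (ks ! s) < L k' ! (ks ! t)) = (L k ! s < L k ! t)"
    unfolding contained_def by blast
  let ?n = "2*k+14" and ?n' = "2*k'+14"
  have fb: "ks ! s < ?n'" if "s < ?n" for s
    using ks(1,3) that len_L nth_mem by metis
  have mono: "ks ! s < ks ! t" if "s < t" "t < ?n" for s t
    using sorted_wrt_nth_less[OF ks(2)] that ks(1) len_L by metis
  have ord: "(g ?n' (ks ! s) < g ?n' (ks ! t)) = (g ?n s < g ?n t)" if "s < ?n" "t < ?n" for s t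
  proof -
    have "L k' ! (ks ! s) = g ?n' (ks ! s)" "L k' ! (ks ! t) = g ?n' (ks ! t)"
      using fb that unfolding L_def by auto
    moreover have "L k ! s = g ?n s" "L k ! t = g ?n t" using that unfolding L_def by auto
    ultimately show ?thesis using ks(4) that len_L by metis
  qed
  show False using no_embed[OF refl refl kk, of "\<lambda>s. ks ! s"] fb mono ord by blast
qed


lemma perm_a: "1 \<le> i \<Longrightarrow> is_perm (2 * i + 12) (a i)"
  using L_perm[of "i - 1"] a_L[of i] by (simp add: algebra_simps)

lemma len_a: "1 \<le> i \<Longrightarrow> length (a i) = 2 * i + 12"
  using perm_a unfolding is_perm_def by blast

lemma nc_a: "1 \<le> i \<Longrightarrow> 1 \<le> j \<Longrightarrow> i \<noteq> j \<Longrightarrow> \<not> contained (a i) (a j)"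
proof -
  assume ij: "1 \<le> i" "1 \<le> j" "i \<noteq> j"
  then consider "i < j" | "j < i" by linarith
  then show ?thesis
  proof cases
    case 1
    then show ?thesis using not_contained_L[of "i - 1" "j - 1"] a_L ij by simp
  next
    case 2
    then have "length (a j) < length (a i)" using len_a ij by simp
    then show ?thesis unfolding contained_def by simp
  qed
qed

theorem mainTheorem1:
  shows "(\<forall>i\<ge>1. is_perm (2 * i + 12) (a i))
       \<and> (\<forall>i j. 1 \<le> i \<longrightarrow> 1 \<le> j \<longrightarrow> i \<noteq> j \<longrightarrow> \<not> contained (a i) (a j))
       \<and> infinite {a i | i. i \<ge> 1}
       \<and> antichain_in all_perms {a i | i. i \<ge> 1}"
proof (intro conjI)
  show "\<forall>i\<ge>1. is_perm (2 * i + 12) (a i)" using perm_a by blast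
  show "\<forall>i j. 1 \<le> i \<longrightarrow> 1 \<le> j \<longrightarrow> i \<noteq> j \<longrightarrow> \<not> contained (a i) (a j)" using nc_a by blast
  have eq: "{a i | i. i \<ge> 1} = a ` {1..}" by auto
  have inj: "inj_on a {1..}"
  proof (rule inj_onI)
    fix x y assume "x \<in> {1..}" "y \<in> {1..}" "a x = a y"
    then have "2 * x + 12 = 2 * y + 12" using len_a by (metis atLeast_iff)
    then show "x = y" by simp
  qed
  show "infinite {a i | i. i \<ge> 1}"
    unfolding eq using finite_imageD[OF _ inj] infinite_Ici[of "1::nat"] by blast
  show "antichain_in all_perms {a i | i. i \<ge> 1}"
    unfolding antichain_in_def all_perms_def
  proof (intro conjI ballI impI)
    show "{a i |i. 1 \<le> i} \<subseteq> {p. \<exists>n. is_perm n p}" using perm_a by blast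
  next
    fix x y assume "x \<in> {a i |i. 1 \<le> i}" "y \<in> {a i |i. 1 \<le> i}" "x \<noteq> y"
    then obtain i j where "x = a i" "y = a j" "1 \<le> i" "1 \<le> j" "i \<noteq> j" by blast
    then show "\<not> contained x y" using nc_a by blast
  qed
qed

end
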